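(* Let $\mathcal{H}$ be a finite-dimensional complex Hilbert space and $n\ge 0$. Let $\mathcal{K}_{n+1}$ be a map of $n+1$ operator arguments on $\mathcal H$ which (a) admits a decomposition $\mathcal{K}_{n+1}=\sum_{(m_0,\ldots,m_n)}\mathcal{K}_{m_0,\ldots,m_n}$ into finitely many completely positive multi-variable maps, where each $\mathcal{K}_{m_0,\ldots,m_n}$ is homogeneous of degree $m_i\in\mathbb{Z}_{\ge0}$ in its $i$-th argument (i.e. $\mathcal K_{m_0,\ldots,m_n}[\ldots,z\hat\rho_i,\ldots]=z^{m_i}\mathcal K_{m_0,\ldots,m_n}[\ldots,\hat\rho_i,\ldots]$ for all $z\in\mathbb C$), each $\mathcal K_{m_0,\ldots,m_n}$ with exactly one $m_i=1$ and all others zero being linear in that argument; (b) satisfies $\mathcal{K}_{n+1}[p\hat\rho_n,\ldots,p\hat\rho_0]=p\,\mathcal{K}_{n+1}[\hat\rho_n,\ldots,\hat\rho_0]$ for all $p\in[0,1]$ and all density matrices $\hat\rho_i$; and (c) is trace preserving on density matrices, i.e. $\mathrm{Tr}\,\mathcal{K}_{n+1}[\hat\rho_n,\ldots,\hat\rho_0]=1$ whenever all $\hat\rho_i$ are density matrices. Then there exist operators $V_{\alpha n m}$ on $\mathcal H$ ($0\le m\le n$, $\alpha$ in a finite index set) and numbers $p_{nm}\ge 0$ with $\sum_{m=0}^n p_{nm}=1$ and $\sum_\alpha V_{\alpha nm}V_{\alpha nm}^\dagger=p_{nm}\hat I$ for each $m$, such that for all density matrices $\hat\rho_0,\ldots,\hat\rho_n$,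 $$\mathcal{K}_{n+1}[\hat\rho_n,\ldots,\hat\rho_0]=\sum_{m=0}^n\sum_\alpha V_{\alpha nm}^\dagger\,\hat\rho_m\,V_{\alpha nm}.$$
   Context: A map $\mathcal K$ of $n+1$ operator arguments is completely positive (in the multi-variable sense of Ando–Choi) if for every $k$ and every $(n+1)$-tuple of positive $k\times k$ block operator matrices $\hat\rho_m=(\hat\rho_{m,ij})_{i,j}$ ($0\le m\le n$), the block matrix with $(i,j)$ block $\mathcal{K}[\hat\rho_{n,ij},\ldots,\hat\rho_{0,ij}]$ is positive. Hypothesis (a) is the Ando–Choi decomposition of multi-variable CP maps (anti-homogeneous parts are excluded), and (b) is the non-signalling condition expressed on sub-normalized states. *)

theory Defs
  imports "HOL-Analysis.Analysis"
begin

text \<open>Operators on the finite-dimensional complex Hilbert space H = complex^'d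
  are represented by matrices of type complex^'d^'d.\<close>

type_synonym 'd op = "complex^'d^'d"

definition adj :: "'d::finite op \<Rightarrow> 'd op" where
  "adj A = (\<chi> i j. cnj (A $ j $ i))"

definition smat :: "complex \<Rightarrow> 'd::finite op \<Rightarrow> 'd op" where
  "smat z A = (\<chi> i j. z * A $ i $ j)"

definition psd :: "'d::finite op \<Rightarrow> bool" where
  "psd A \<longleftrightarrow> (\<forall>x :: complex^'d.
     (let q = (\<Sum>i\<in>UNIV. \<Sum>j\<in>UNIV. cnj (x $ i) * A $ i $ j * x $ j)
      in Im q = 0 \<and> 0 \<le> Re q))"

text \<open>Positivity of the k x k block operator matrix with (i,j) block B i j,
  acting on H^k (vectors x 0, ..., x (k-1) in H).\<close>
definition block_psd :: "nat \<Rightarrow> (nat \<Rightarrow> nat \<Rightarrow> 'd::finite op) \<Rightarrow> bool" where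
  "block_psd k B \<longleftrightarrow> (\<forall>x :: nat \<Rightarrow> complex^'d.
     (let q = (\<Sum>i<k. \<Sum>j<k. \<Sum>a\<in>UNIV. \<Sum>b\<in>UNIV. cnj (x i $ a) * B i j $ a $ b * x j $ b)
      in Im q = 0 \<and> 0 \<le> Re q))"

definition density :: "'d::finite op \<Rightarrow> bool" where
  "density \<rho> \<longleftrightarrow> psd \<rho> \<and> trace \<rho> = 1"

text \<open>A map of n+1 operator arguments is modelled as a function on lists;
  the argument list [\<rho>_0, ..., \<rho>_n] corresponds to the paper's K[\<rho>_n, ..., \<rho>_0].
  Multi-variable complete positivity (Ando--Choi): rho_b m i j is the (i,j) block of the
  m-th block matrix.\<close>
definition mv_CP :: "nat \<Rightarrow> ('d::finite op list \<Rightarrow> 'd op) \<Rightarrow> bool" where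
  "mv_CP n K \<longleftrightarrow> (\<forall>k (\<rho>b :: nat \<Rightarrow> nat \<Rightarrow> nat \<Rightarrow> 'd op).
     (\<forall>m\<le>n. block_psd k (\<rho>b m)) \<longrightarrow>
     block_psd k (\<lambda>i j. K (map (\<lambda>m. \<rho>b m i j) [0..<Suc n])))"

definition homog_in :: "nat \<Rightarrow> ('d::finite op list \<Rightarrow> 'd op) \<Rightarrow> nat \<Rightarrow> nat \<Rightarrow> bool" where
  "homog_in n K i deg \<longleftrightarrow> (\<forall>\<rho>s z. length \<rho>s = Suc n \<longrightarrow>
     K (\<rho>s[i := smat z (\<rho>s ! i)]) = smat (z ^ deg) (K \<rho>s))"

text \<open>Additivity (hence, with homogeneity of degree 1, linearity) in the i-th argument.\<close>
definition additive_in :: "nat \<Rightarrow> ('d::finite op list \<Rightarrow> 'd op) \<Rightarrow> nat \<Rightarrow> bool" where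
  "additive_in n K i \<longleftrightarrow> (\<forall>\<rho>s A B. length \<rho>s = Suc n \<longrightarrow>
     K (\<rho>s[i := A + B]) = K (\<rho>s[i := A]) + K (\<rho>s[i := B]))"

end

theory Submission
  imports Defs
begin


definition qf :: "'i set \<Rightarrow> ('i \<Rightarrow> 'i \<Rightarrow> complex) \<Rightarrow> ('i \<Rightarrow> complex) \<Rightarrow> complex" where
  "qf I C x = (\<Sum>i\<in>I. \<Sum>j\<in>I. cnj (x i) * C i j * x j)"

definition psdf :: "'i set \<Rightarrow> ('i \<Rightarrow> 'i \<Rightarrow> complex) \<Rightarrow> bool" where
  "psdf I C \<longleftrightarrow> (\<forall>x. Im (qf I C x) = 0 \<and> 0 \<le> Re (qf I C x))"

lemma psdfD: "psdf I C \<Longrightarrow> Im (qf I C x) = 0" "psdf I C \<Longrightarrow> 0 \<le> Re (qf I C x)"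
  unfolding psdf_def by blast+

lemma sum_one:
  assumes "finite I" "i \<in> I" "\<forall>p\<in>I. p \<noteq> i \<longrightarrow> f p = 0"
  shows "(\<Sum>p\<in>I. f p) = f i"
proof -
  have "(\<Sum>p\<in>I. f p) = (\<Sum>p\<in>{i}. f p)"
    using assms by (intro sum.mono_neutral_right) auto
  then show ?thesis using assms by simp
qed

lemma sum_two:
  assumes "finite I" "i \<in> I" "j \<in> I" "i \<noteq> j" "\<forall>p\<in>I. p \<noteq> i \<and> p \<noteq> j \<longrightarrow> f p = 0"
  shows "(\<Sum>p\<in>I. f p) = f i + f j"
proof -
  have "(\<Sum>p\<in>I. f p) = (\<Sum>p\<in>{i,j}. f p)"
    using assms by (intro sum.mono_neutral_right) auto
  then show ?thesis using assms by simp
qed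

lemma qf_one:
  assumes "finite I" "i \<in> I"
  shows "qf I C (\<lambda>p. if p = i then a else 0) = cnj a * C i i * a"
  unfolding qf_def
  by (subst sum_one[OF assms], simp, subst sum_one[OF assms]) auto

lemma qf_two:
  assumes "finite I" "i \<in> I" "j \<in> I" "i \<noteq> j"
  shows "qf I C (\<lambda>p. if p = i then a else if p = j then b else 0)
     = cnj a * C i i * a + cnj a * C i j * b + cnj b * C j i * a + cnj b * C j j * b"
  unfolding qf_def
  apply (subst sum_two[OF assms], use assms in simp)
  apply (subst sum_two[OF assms], use assms in simp)
  using assms by (simp add: algebra_simps not_sym[OF assms(4)])

lemma psdf_diag:
  assumes "finite I" "psdf I C" "i \<in> I"
  shows "Im (C i i) = 0" "0 \<le> Re (C i i)"
proof -
  have h: "qf I C (\<lambda>p. if p = i then 1 else 0) = C i i" using qf_one[OF assms(1,3), of C 1] by simp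
  show "Im (C i i) = 0" using psdfD(1)[OF assms(2), of "\<lambda>p. if p = i then 1 else 0"] h by simp
  show "0 \<le> Re (C i i)" using psdfD(2)[OF assms(2), of "\<lambda>p. if p = i then 1 else 0"] h by simp
qed

lemma psdf_herm:
  assumes "finite I" "psdf I C" "i \<in> I" "j \<in> I"
  shows "C j i = cnj (C i j)"
proof (cases "i = j")
  case True
  then show ?thesis using psdf_diag[OF assms(1-3)] by (simp add: complex_eq_iff)
next
  case False
  have 1: "Im (qf I C (\<lambda>p. if p = i then 1 else if p = j then 1 else 0)) = 0"
    by (rule psdfD(1)[OF assms(2)])
  have 2: "Im (qf I C (\<lambda>p. if p = i then 1 else if p = j then \<i> else 0)) = 0"
    by (rule psdfD(1)[OF assms(2)])
  have di: "Im (C i i) = 0" "Im (C j j) = 0" using psdf_diag(1)[OF assms(1,2,3)] psdf_diag(1)[OF assms(1,2,4)] by auto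
  have e1: "Im (C i j + C j i) = 0"
    using 1 di unfolding qf_two[OF assms(1,3,4) False] by simp
  have e2: "Re (C i j) - Re (C j i) = 0"
    using 2 di unfolding qf_two[OF assms(1,3,4) False] by simp
  show ?thesis using e1 e2 by (intro complex_eqI) auto
qed


lemma if0_mult_r: "a * (if P then b else (0::'a::mult_zero)) = (if P then a * b else 0)" by simp
lemma if0_mult_l: "(if P then b else (0::'a::mult_zero)) * a = (if P then b * a else 0)" by simp
lemma if0_cnj: "cnj (if P then b else 0) = (if P then cnj b else 0)" by simp

lemma psdf_zero_diag:
  assumes "finite I" "psdf I C" "k \<in> I" "j \<in> I" "C k k = 0"
  shows "C k j = 0"
proof (rule ccontr)
  assume c0: "C k j \<noteq> 0"
  define c where "c = C k j"
  have jk: "j \<noteq> k" using c0 assms(5) by auto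
  define r where "r = cmod c ^ 2"
  have rpos: "r > 0" using c0 unfolding r_def c_def by simp
  have cc: "cnj c * c = of_real r" unfolding r_def using complex_norm_square[of c] by (simp add: mult.commute)
  have herm: "C j k = cnj c" using psdf_herm[OF assms(1,2,3,4)] c_def by simp
  define a where "a = (Re (C j j) + 1) / (2 * r)"
  define t where "t = - of_real a * c"
  have q: "qf I C (\<lambda>p. if p = k then t else if p = j then 1 else 0)
      = cnj t * C k k * t + cnj t * C k j * 1 + cnj 1 * C j k * t + cnj 1 * C j j * 1"
    by (rule qf_two[OF assms(1,3,4) jk[symmetric]])
  have "cnj t * C k j = - of_real a * of_real r" unfolding t_def c_def[symmetric] using cc by simp
  moreover have "cnj 1 * C j k * t = - of_real a * of_real r" unfolding t_def herm using cc
    by (simp add: algebra_simps)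
  ultimately have "qf I C (\<lambda>p. if p = k then t else if p = j then 1 else 0) = C j j - 2 * of_real (a * r)"
    using q assms(5) by simp
  then have "Re (qf I C (\<lambda>p. if p = k then t else if p = j then 1 else 0)) = Re (C j j) - 2 * (a * r)"
    by simp
  also have "\<dots> = -1" unfolding a_def using rpos by (simp add: field_simps)
  finally show False using psdfD(2)[OF assms(2), of "\<lambda>p. if p = k then t else if p = j then 1 else 0"] by simp
qed

lemma qf_shift:
  assumes "finite I" "k \<in> I"
  shows "qf I C (\<lambda>p. x p + (if p = k then l else 0)) = qf I C x + cnj l * (\<Sum>j\<in>I. C k j * x j)
     + (\<Sum>i\<in>I. cnj (x i) * C i k) * l + cnj l * C k k * l"
proof -
  define H where "H i = (\<Sum>j\<in>I. C i j * x j)" for i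
  have G: "(\<Sum>j\<in>I. C i j * (x j + (if j = k then l else 0))) = H i + C i k * l" for i
    unfolding H_def using assms by (simp add: distrib_left sum.distrib if0_mult_r)
  have "qf I C (\<lambda>p. x p + (if p = k then l else 0)) =
      (\<Sum>i\<in>I. (cnj (x i) + (if i = k then cnj l else 0)) * (\<Sum>j\<in>I. C i j * (x j + (if j = k then l else 0))))"
    unfolding qf_def by (intro sum.cong refl) (simp add: sum_distrib_left mult.assoc)
  also have "\<dots> = (\<Sum>i\<in>I. cnj (x i) * H i + cnj (x i) * C i k * l + (if i = k then cnj l * (H i + C i k * l) else 0))"
    unfolding G by (intro sum.cong refl) (simp add: algebra_simps)
  also have "\<dots> = (\<Sum>i\<in>I. cnj (x i) * H i) + (\<Sum>i\<in>I. cnj (x i) * C i k) * l + cnj l * (H k + C k k * l)"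
    using assms by (simp add: sum.distrib sum_distrib_right)
  also have "(\<Sum>i\<in>I. cnj (x i) * H i) = qf I C x"
    unfolding qf_def H_def by (simp add: sum_distrib_left mult.assoc)
  finally show ?thesis unfolding H_def by (simp add: algebra_simps)
qed

lemma psdf_schur:
  assumes "finite I" "psdf I C" "k \<in> I" "C k k \<noteq> 0"
  shows "psdf I (\<lambda>i j. C i j - C i k * C k j / C k k)"
  unfolding psdf_def
proof
  fix x
  define r where "r = C k k"
  obtain \<rho> where rr: "r = of_real \<rho>" using psdf_diag(1)[OF assms(1,2,3)] r_def
    by (metis complex_is_Real_iff Reals_cases)
  have "r \<noteq> 0" using assms(4) r_def by simp
  then have \<rho>0: "\<rho> \<noteq> 0" using rr by auto
  define s where "s = (\<Sum>j\<in>I. C k j * x j)"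
  define s' where "s' = (\<Sum>i\<in>I. cnj (x i) * C i k)"
  have "qf I (\<lambda>i j. C i j - C i k * C k j / C k k) x = qf I C x - (\<Sum>i\<in>I. \<Sum>j\<in>I. cnj (x i) * C i k * (C k j * x j)) / r"
    unfolding qf_def r_def by (simp add: sum_subtractf sum_divide_distrib algebra_simps)
  also have "(\<Sum>i\<in>I. \<Sum>j\<in>I. cnj (x i) * C i k * (C k j * x j)) = s' * s"
    unfolding s_def s'_def by (simp add: sum_product)
  finally have e1: "qf I (\<lambda>i j. C i j - C i k * C k j / C k k) x = qf I C x - s' * s / r" .
  have e2: "qf I C (\<lambda>p. x p + (if p = k then - s / r else 0)) = qf I C x - s' * s / r"
    unfolding qf_shift[OF assms(1,3)] s_def[symmetric] s'_def[symmetric] r_def[symmetric]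
    unfolding rr using \<rho>0 by (simp add: field_simps)
  show "Im (qf I (\<lambda>i j. C i j - C i k * C k j / C k k) x) = 0 \<and>
         0 \<le> Re (qf I (\<lambda>i j. C i j - C i k * C k j / C k k) x)"
    unfolding e1 e2[symmetric] using psdfD[OF assms(2)] by blast
qed


lemma psdf_decomp_aux:
  assumes I: "finite I"
  shows "finite S \<Longrightarrow> S \<subseteq> I \<Longrightarrow> psdf I C \<Longrightarrow> (\<forall>i\<in>I. \<forall>j\<in>I. (i \<notin> S \<or> j \<notin> S) \<longrightarrow> C i j = 0)
    \<Longrightarrow> \<exists>u. \<forall>i\<in>I. \<forall>j\<in>I. C i j = (\<Sum>k\<in>S. cnj (u k i) * u k j)"
proof (induction S arbitrary: C rule: finite_induct)
  case empty
  then show ?case by auto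
next
  case (insert k S C)
  have kI: "k \<in> I" using insert.prems by auto
  have SI: "S \<subseteq> I" using insert.prems by auto
  show ?case
  proof (cases "C k k = 0")
    case True
    have z1: "C k j = 0" if "j \<in> I" for j using psdf_zero_diag[OF I insert.prems(2) kI that True] .
    have z2: "C j k = 0" if "j \<in> I" for j using psdf_herm[OF I insert.prems(2) kI that] z1[OF that] by simp
    have supp: "\<forall>i\<in>I. \<forall>j\<in>I. (i \<notin> S \<or> j \<notin> S) \<longrightarrow> C i j = 0"
    proof (intro ballI impI)
      fix i j assume ij: "i \<in> I" "j \<in> I" "i \<notin> S \<or> j \<notin> S"
      show "C i j = 0"
      proof (cases "i = k \<or> j = k")
        case True then show ?thesis using z1 z2 ij by auto
      next
        case False then show ?thesis using insert.prems(3) ij by auto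
      qed
    qed
    obtain u where u: "\<forall>i\<in>I. \<forall>j\<in>I. C i j = (\<Sum>k\<in>S. cnj (u k i) * u k j)"
      using insert.IH[OF SI insert.prems(2) supp] by blast
    define u' where "u' = u(k := (\<lambda>_. 0))"
    have "\<forall>i\<in>I. \<forall>j\<in>I. C i j = (\<Sum>k\<in>insert k S. cnj (u' k i) * u' k j)"
    proof (intro ballI)
      fix i j assume "i \<in> I" "j \<in> I"
      have "(\<Sum>k'\<in>S. cnj (u' k' i) * u' k' j) = (\<Sum>k'\<in>S. cnj (u k' i) * u k' j)"
        using insert.hyps(2) unfolding u'_def by (intro sum.cong) auto
      then show "C i j = (\<Sum>k\<in>insert k S. cnj (u' k i) * u' k j)"
        using u \<open>i \<in> I\<close> \<open>j \<in> I\<close> insert.hyps by (simp add: u'_def)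
    qed
    then show ?thesis by blast
  next
    case False
    define C' where "C' = (\<lambda>i j. C i j - C i k * C k j / C k k)"
    have psd': "psdf I C'" unfolding C'_def by (rule psdf_schur[OF I insert.prems(2) kI False])
    have supp: "\<forall>i\<in>I. \<forall>j\<in>I. (i \<notin> S \<or> j \<notin> S) \<longrightarrow> C' i j = 0"
    proof (intro ballI impI)
      fix i j assume ij: "i \<in> I" "j \<in> I" "i \<notin> S \<or> j \<notin> S"
      show "C' i j = 0"
      proof (cases "i = k \<or> j = k")
        case True
        then show ?thesis unfolding C'_def using False by auto
      next
        case False2: False
        then have "i \<notin> insert k S \<or> j \<notin> insert k S" using ij by auto
        then have "C i j = 0" "C i k = 0 \<or> C k j = 0" using insert.prems(3) ij kI by blast+
        then show ?thesis unfolding C'_def by auto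
      qed
    qed
    obtain u where u: "\<forall>i\<in>I. \<forall>j\<in>I. C' i j = (\<Sum>k\<in>S. cnj (u k i) * u k j)"
      using insert.IH[OF SI psd' supp] by blast
    obtain \<rho> where rr: "C k k = of_real \<rho>" using psdf_diag(1)[OF I insert.prems(2) kI]
      by (metis complex_is_Real_iff Reals_cases)
    have \<rho>pos: "\<rho> > 0" using psdf_diag(2)[OF I insert.prems(2) kI] False rr by auto
    define w where "w j = C k j / of_real (sqrt \<rho>)" for j
    define u' where "u' = u(k := w)"
    have "\<forall>i\<in>I. \<forall>j\<in>I. C i j = (\<Sum>k\<in>insert k S. cnj (u' k i) * u' k j)"
    proof (intro ballI)
      fix i j assume ij: "i \<in> I" "j \<in> I"
      have "(\<Sum>k'\<in>S. cnj (u' k' i) * u' k' j) = (\<Sum>k'\<in>S. cnj (u k' i) * u k' j)"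
        using insert.hyps(2) unfolding u'_def by (intro sum.cong) auto
      also have "\<dots> = C' i j" using u ij by simp
      finally have e1: "(\<Sum>k'\<in>S. cnj (u' k' i) * u' k' j) = C' i j" .
      have hik: "C i k = cnj (C k i)" using psdf_herm[OF I insert.prems(2) kI ij(1)] .
      have sq: "of_real (sqrt \<rho>) * of_real (sqrt \<rho>) = (of_real \<rho> :: complex)"
        using \<rho>pos by (simp flip: of_real_mult)
      have "cnj (u' k i) * u' k j = cnj (C k i) * C k j / (of_real (sqrt \<rho>) * of_real (sqrt \<rho>))"
        by (simp add: u'_def w_def)
      also have "\<dots> = C i k * C k j / C k k" unfolding sq hik rr ..
      finally have e2: "cnj (u' k i) * u' k j = C i k * C k j / C k k" .
      show "C i j = (\<Sum>k\<in>insert k S. cnj (u' k i) * u' k j)"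
        using insert.hyps e1 e2 unfolding C'_def by simp
    qed
    then show ?thesis by blast
  qed
qed

lemma psdf_decomp:
  assumes "finite I" "psdf I C"
  shows "\<exists>u. \<forall>i\<in>I. \<forall>j\<in>I. C i j = (\<Sum>k\<in>I. cnj (u k i) * u k j)"
  using psdf_decomp_aux[OF assms(1) assms(1) order_refl assms(2)] by blast




definition Emat :: "'d::finite \<Rightarrow> 'd \<Rightarrow> 'd op" where
  "Emat a b = (\<chi> x y. if x = a \<and> y = b then 1 else 0)"

lemma smat_zero[simp]: "smat 0 A = 0" by (simp add: smat_def vec_eq_iff)
lemma smat_one[simp]: "smat 1 A = A" by (simp add: smat_def vec_eq_iff)
lemma smat_nth[simp]: "smat z A $ i $ j = z * A $ i $ j" by (simp add: smat_def)
lemma smat_smat: "smat a (smat b A) = smat (a * b) A" by (simp add: smat_def vec_eq_iff)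

lemma mat_expand: "A = (\<Sum>x\<in>UNIV. \<Sum>y\<in>UNIV. smat (A $ x $ y) (Emat x y :: 'd::finite op))"
proof -
  have *: "(\<Sum>x\<in>UNIV. \<Sum>y\<in>UNIV. smat (A $ x $ y) (Emat x y :: 'd::finite op)) $ a $ b = A $ a $ b" for a b
  proof -
    have "(\<Sum>x\<in>UNIV. \<Sum>y\<in>UNIV. smat (A $ x $ y) (Emat x y :: 'd::finite op)) $ a $ b
       = (\<Sum>x\<in>UNIV. \<Sum>y\<in>UNIV. A $ x $ y * (if a = x \<and> b = y then 1 else 0))"
      by (simp add: Emat_def)
    also have "\<dots> = (\<Sum>x\<in>UNIV. if a = x then A $ x $ b else 0)"
      by (intro sum.cong refl) (auto simp: if_distrib cong: if_cong)
    also have "\<dots> = A $ a $ b" by simp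
    finally show ?thesis .
  qed
  show ?thesis by (subst vec_eq_iff, intro allI, subst vec_eq_iff, intro allI, rule *[symmetric])
qed

lemma lin_zero:
  assumes hom: "\<forall>z A. L (smat z A) = smat z (L A)"
  shows "L 0 = 0"
proof -
  have "L (smat 0 0) = smat 0 (L 0)" using hom by blast
  then show ?thesis by simp
qed

lemma lin_sum:
  assumes add: "\<forall>A B. L (A + B) = L A + L B" and hom: "\<forall>z A. L (smat z A) = smat z (L A)"
  shows "L (\<Sum>x\<in>F. f x) = (\<Sum>x\<in>F. L (f x))"
proof (induction F rule: infinite_finite_induct)
  case (infinite F)
  then show ?case using lin_zero[OF hom] by simp
next
  case empty
  then show ?case using lin_zero[OF hom] by simp
next
  case (insert x F)
  then show ?case using add by simp
qed

lemma lin_expand: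
  assumes add: "\<forall>A B. L (A + B) = L A + L B" and hom: "\<forall>z A. L (smat z A) = smat z (L A)"
  shows "L A = (\<Sum>x\<in>UNIV. \<Sum>y\<in>UNIV. smat (A $ x $ y) (L (Emat x y :: 'd::finite op)))"
proof -
  have "L A = L (\<Sum>x\<in>UNIV. \<Sum>y\<in>UNIV. smat (A $ x $ y) (Emat x y :: 'd::finite op))"
    using mat_expand[of A] by simp
  also have "\<dots> = (\<Sum>x\<in>UNIV. L (\<Sum>y\<in>UNIV. smat (A $ x $ y) (Emat x y :: 'd::finite op)))"
    by (rule lin_sum[OF assms])
  also have "\<dots> = (\<Sum>x\<in>UNIV. \<Sum>y\<in>UNIV. L (smat (A $ x $ y) (Emat x y :: 'd::finite op)))"
    by (intro sum.cong refl lin_sum[OF assms])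
  also have "\<dots> = (\<Sum>x\<in>UNIV. \<Sum>y\<in>UNIV. smat (A $ x $ y) (L (Emat x y :: 'd::finite op)))"
    using hom by simp
  finally show ?thesis .
qed


lemma sum_delta2:
  "(\<Sum>a\<in>(UNIV::'a::finite set). \<Sum>b\<in>(UNIV::'b::finite set). f a b * (if a = p \<and> b = q then 1 else (0::complex))) = f p q"
proof -
  have "(\<Sum>a\<in>(UNIV::'a set). \<Sum>b\<in>(UNIV::'b set). f a b * (if a = p \<and> b = q then 1 else (0::complex)))
     = (\<Sum>a\<in>(UNIV::'a set). if a = p then f a q else 0)"
    by (intro sum.cong refl) (auto simp: if_distrib cong: if_cong)
  then show ?thesis by simp
qed

lemma sum_UNIV_pair: "(\<Sum>p\<in>UNIV. F p) = (\<Sum>c\<in>UNIV. \<Sum>a\<in>UNIV. F (c, a))"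
  unfolding sum.cartesian_product UNIV_Times_UNIV by (simp add: case_prod_beta')

lemma block_psd_Emat:
  fixes g :: "nat \<Rightarrow> 'd::finite"
  shows "block_psd k (\<lambda>i j. Emat (g i) (g j))"
  unfolding block_psd_def Let_def
proof
  fix x :: "nat \<Rightarrow> complex^'d"
  define s where "s = (\<Sum>j<k. x j $ g j)"
  have "(\<Sum>i<k. \<Sum>j<k. \<Sum>a\<in>UNIV. \<Sum>b\<in>UNIV. cnj (x i $ a) * Emat (g i) (g j) $ a $ b * x j $ b)
      = (\<Sum>i<k. \<Sum>j<k. cnj (x i $ g i) * x j $ g j)"
  proof (intro sum.cong refl)
    fix i j
    show "(\<Sum>a\<in>UNIV. \<Sum>b\<in>UNIV. cnj (x i $ a) * Emat (g i) (g j) $ a $ b * x j $ b) = cnj (x i $ g i) * x j $ g j"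
      using sum_delta2[of "\<lambda>a b. cnj (x i $ a) * x j $ b" "g i" "g j"]
      by (simp add: Emat_def algebra_simps)
  qed
  also have "\<dots> = cnj s * s" unfolding s_def by (simp add: sum_product)
  also have "\<dots> = of_real (cmod s ^ 2)" using complex_norm_square[of s] by (simp add: mult.commute)
  finally show "Im (\<Sum>i<k. \<Sum>j<k. \<Sum>a\<in>UNIV. \<Sum>b\<in>UNIV. cnj (x i $ a) * Emat (g i) (g j) $ a $ b * x j $ b) = 0 \<and>
    0 \<le> Re (\<Sum>i<k. \<Sum>j<k. \<Sum>a\<in>UNIV. \<Sum>b\<in>UNIV. cnj (x i $ a) * Emat (g i) (g j) $ a $ b * x j $ b)"
    by simp
qed

lemma choi_psdf:
  fixes L :: "'d::finite op \<Rightarrow> 'd op"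
  assumes cp: "\<forall>k B. block_psd k B \<longrightarrow> block_psd k (\<lambda>i j. L (B i j))"
  shows "psdf UNIV (\<lambda>(p::'d\<times>'d) (q::'d\<times>'d). L (Emat (fst p) (fst q)) $ snd p $ snd q)"
proof -
  obtain g where g: "bij_betw g {0..<CARD('d)} (UNIV :: 'd set)"
    using ex_bij_betw_nat_finite[of "UNIV :: 'd set"] by auto
  have g': "bij_betw g {..<CARD('d)} (UNIV :: 'd set)" using g by (simp add: atLeast0LessThan)
  have bp: "block_psd CARD('d) (\<lambda>i j. L (Emat (g i) (g j)))"
    using cp block_psd_Emat by blast
  show ?thesis unfolding psdf_def
  proof
    fix x :: "'d\<times>'d \<Rightarrow> complex"
    define y where "y i = (\<chi> a. x (g i, a))" for i
    have "qf UNIV (\<lambda>p q. L (Emat (fst p) (fst q)) $ snd p $ snd q) x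
       = (\<Sum>c\<in>UNIV. \<Sum>a\<in>UNIV. \<Sum>c'\<in>UNIV. \<Sum>b\<in>UNIV. cnj (x (c, a)) * L (Emat c c') $ a $ b * x (c', b))"
      unfolding qf_def by (subst sum_UNIV_pair, intro sum.cong refl, subst sum_UNIV_pair, simp)
    also have "\<dots> = (\<Sum>c\<in>UNIV. \<Sum>c'\<in>UNIV. \<Sum>a\<in>UNIV. \<Sum>b\<in>UNIV. cnj (x (c, a)) * L (Emat c c') $ a $ b * x (c', b))"
      by (intro sum.cong refl sum.swap)
    also have "\<dots> = (\<Sum>i<CARD('d). \<Sum>j<CARD('d). \<Sum>a\<in>UNIV. \<Sum>b\<in>UNIV. cnj (y i $ a) * L (Emat (g i) (g j)) $ a $ b * y j $ b)"
      unfolding y_def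
      by (simp add: sum.reindex_bij_betw[OF g', symmetric])
    finally have e: "qf UNIV (\<lambda>p q. L (Emat (fst p) (fst q)) $ snd p $ snd q) x
       = (\<Sum>i<CARD('d). \<Sum>j<CARD('d). \<Sum>a\<in>UNIV. \<Sum>b\<in>UNIV. cnj (y i $ a) * L (Emat (g i) (g j)) $ a $ b * y j $ b)" .
    show "Im (qf UNIV (\<lambda>p q. L (Emat (fst p) (fst q)) $ snd p $ snd q) x) = 0 \<and>
          0 \<le> Re (qf UNIV (\<lambda>p q. L (Emat (fst p) (fst q)) $ snd p $ snd q) x)"
      unfolding e using bp unfolding block_psd_def Let_def by blast
  qed
qed


lemma kraus:
  fixes L :: "'d::finite op \<Rightarrow> 'd op"
  assumes add: "\<forall>A B. L (A + B) = L A + L B" and hom: "\<forall>z A. L (smat z A) = smat z (L A)"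
    and cp: "\<forall>k B. block_psd k B \<longrightarrow> block_psd k (\<lambda>i j. L (B i j))"
  shows "\<exists>W :: 'd\<times>'d \<Rightarrow> 'd op. \<forall>A. L A = (\<Sum>k\<in>UNIV. adj (W k) ** A ** W k)"
proof -
  obtain u :: "'d\<times>'d \<Rightarrow> 'd\<times>'d \<Rightarrow> complex" where
    u: "\<forall>p\<in>UNIV. \<forall>q\<in>UNIV. L (Emat (fst p) (fst q)) $ snd p $ snd q = (\<Sum>k\<in>UNIV. cnj (u k p) * u k q)"
    using psdf_decomp[OF finite_class.finite_UNIV choi_psdf[OF cp]] by auto
  have uE: "L (Emat c c') $ a $ b = (\<Sum>k\<in>UNIV. cnj (u k (c, a)) * u k (c', b))" for c c' a b
    using u[rule_format, of "(c, a)" "(c', b)"] by simp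
  define W where "W k = (\<chi> c a. u k (c, a))" for k
  have "L A = (\<Sum>k\<in>UNIV. adj (W k) ** A ** W k)" for A
  proof -
    have "L A $ a $ b = (\<Sum>k\<in>UNIV. adj (W k) ** A ** W k) $ a $ b" for a b
    proof -
      define T where "T k x y = cnj (u k (x, a)) * A $ x $ y * u k (y, b)" for k x y
      have "L A $ a $ b = (\<Sum>x\<in>UNIV. \<Sum>y\<in>UNIV. A $ x $ y * L (Emat x y) $ a $ b)"
        by (subst lin_expand[OF add hom], simp)
      also have "\<dots> = (\<Sum>x\<in>UNIV. \<Sum>y\<in>UNIV. \<Sum>k\<in>UNIV. T k x y)"
        unfolding uE T_def by (simp add: sum_distrib_left algebra_simps)
      also have "\<dots> = (\<Sum>x\<in>UNIV. \<Sum>k\<in>UNIV. \<Sum>y\<in>UNIV. T k x y)"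
        by (intro sum.cong refl sum.swap)
      also have "\<dots> = (\<Sum>k\<in>UNIV. \<Sum>x\<in>UNIV. \<Sum>y\<in>UNIV. T k x y)"
        by (rule sum.swap)
      also have "\<dots> = (\<Sum>k\<in>UNIV. \<Sum>y\<in>UNIV. \<Sum>x\<in>UNIV. T k x y)"
        by (intro sum.cong refl sum.swap)
      also have "\<dots> = (\<Sum>k\<in>UNIV. adj (W k) ** A ** W k) $ a $ b"
        unfolding T_def by (simp add: matrix_matrix_mult_def adj_def W_def sum_distrib_right)
      finally show ?thesis .
    qed
    then show ?thesis by (subst vec_eq_iff, intro allI, subst vec_eq_iff, intro allI)
  qed
  then show ?thesis by blast
qed



lemma trace_kraus:
  fixes W :: "'k::finite \<Rightarrow> 'd::finite op"
  shows "trace (\<Sum>k\<in>UNIV. adj (W k) ** A ** W k)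
       = (\<Sum>x\<in>UNIV. \<Sum>y\<in>UNIV. A $ x $ y * (\<Sum>k\<in>UNIV. W k ** adj (W k)) $ y $ x)"
proof -
  define T where "T k a x y = cnj (W k $ x $ a) * A $ x $ y * W k $ y $ a" for k a x y
  have "trace (\<Sum>k\<in>UNIV. adj (W k) ** A ** W k) = (\<Sum>a\<in>UNIV. \<Sum>k\<in>UNIV. \<Sum>y\<in>UNIV. \<Sum>x\<in>UNIV. T k a x y)"
    unfolding trace_def T_def by (simp add: matrix_matrix_mult_def adj_def sum_distrib_right)
  also have "\<dots> = (\<Sum>k\<in>UNIV. \<Sum>a\<in>UNIV. \<Sum>y\<in>UNIV. \<Sum>x\<in>UNIV. T k a x y)" by (rule sum.swap)
  also have "\<dots> = (\<Sum>k\<in>UNIV. \<Sum>y\<in>UNIV. \<Sum>a\<in>UNIV. \<Sum>x\<in>UNIV. T k a x y)" by (intro sum.cong refl sum.swap)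
  also have "\<dots> = (\<Sum>y\<in>UNIV. \<Sum>k\<in>UNIV. \<Sum>a\<in>UNIV. \<Sum>x\<in>UNIV. T k a x y)" by (rule sum.swap)
  also have "\<dots> = (\<Sum>y\<in>UNIV. \<Sum>k\<in>UNIV. \<Sum>x\<in>UNIV. \<Sum>a\<in>UNIV. T k a x y)" by (intro sum.cong refl sum.swap)
  also have "\<dots> = (\<Sum>y\<in>UNIV. \<Sum>x\<in>UNIV. \<Sum>k\<in>UNIV. \<Sum>a\<in>UNIV. T k a x y)" by (intro sum.cong refl sum.swap)
  also have "\<dots> = (\<Sum>x\<in>UNIV. \<Sum>y\<in>UNIV. \<Sum>k\<in>UNIV. \<Sum>a\<in>UNIV. T k a x y)" by (rule sum.swap)
  also have "\<dots> = (\<Sum>x\<in>UNIV. \<Sum>y\<in>UNIV. A $ x $ y * (\<Sum>k\<in>UNIV. W k ** adj (W k)) $ y $ x)"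
    unfolding T_def by (simp add: matrix_matrix_mult_def adj_def sum_distrib_left algebra_simps)
  finally show ?thesis .
qed

lemma kraus_diag:
  fixes W :: "'k::finite \<Rightarrow> 'd::finite op"
  shows "(\<Sum>k\<in>UNIV. W k ** adj (W k)) $ c $ c = of_real (\<Sum>k\<in>UNIV. \<Sum>a\<in>UNIV. cmod (W k $ c $ a) ^ 2)"
  by (simp add: matrix_matrix_mult_def adj_def of_real_sum flip: complex_norm_square)

definition Pm :: "('d::finite \<Rightarrow> complex) \<Rightarrow> 'd op" where
  "Pm v = (\<chi> i j. v i * cnj (v j))"

lemma psd_Pm: fixes v :: "'d::finite \<Rightarrow> complex" shows "psd (Pm v)"
  unfolding psd_def Let_def
proof
  fix x :: "complex^'d"
  define s where "s = (\<Sum>j\<in>UNIV. cnj (v j) * x $ j)"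
  have "(\<Sum>i\<in>UNIV. \<Sum>j\<in>UNIV. cnj (x $ i) * Pm v $ i $ j * x $ j) = cnj s * s"
    unfolding s_def Pm_def by (simp add: sum_product algebra_simps)
  also have "\<dots> = of_real (cmod s ^ 2)" using complex_norm_square[of s] by (simp add: mult.commute)
  finally show "Im (\<Sum>i\<in>UNIV. \<Sum>j\<in>UNIV. cnj (x $ i) * Pm v $ i $ j * x $ j) = 0 \<and>
    0 \<le> Re (\<Sum>i\<in>UNIV. \<Sum>j\<in>UNIV. cnj (x $ i) * Pm v $ i $ j * x $ j)" by simp
qed

lemma density_Pm: "(\<Sum>i\<in>UNIV. v i * cnj (v i)) = 1 \<Longrightarrow> density (Pm v)"
  unfolding density_def using psd_Pm by (simp add: trace_def Pm_def)

lemma Pm_trace_form: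
  "(\<Sum>x\<in>UNIV. \<Sum>y\<in>UNIV. Pm v $ x $ y * S $ y $ x) = qf UNIV (\<lambda>i j. S $ i $ j) v"
proof -
  have "(\<Sum>x\<in>UNIV. \<Sum>y\<in>UNIV. Pm v $ x $ y * S $ y $ x) = (\<Sum>x\<in>UNIV. \<Sum>y\<in>UNIV. cnj (v y) * S $ y $ x * v x)"
    unfolding Pm_def by (simp add: algebra_simps)
  also have "\<dots> = (\<Sum>y\<in>UNIV. \<Sum>x\<in>UNIV. cnj (v y) * S $ y $ x * v x)" by (rule sum.swap)
  finally show ?thesis unfolding qf_def .
qed

lemma Emat_Pm: "Emat c c = Pm (\<lambda>p. if p = c then 1 else 0)"
  by (simp add: Emat_def Pm_def vec_eq_iff)

lemma density_Emat: "density (Emat c c)"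
proof -
  have "(\<Sum>i\<in>UNIV. (if i = c then 1 else 0) * cnj (if i = c then 1 else (0::complex))) = (\<Sum>i\<in>UNIV. if i = c then 1 else 0)"
    by (intro sum.cong) auto
  then show ?thesis unfolding Emat_Pm by (intro density_Pm) simp
qed

lemma homog_scale:
  assumes hom: "\<forall>i\<le>n. homog_in n F i (m ! i)" and len: "length \<rho>s = Suc n"
  shows "F (map (\<lambda>i. smat (zs i) (\<rho>s ! i)) [0..<Suc n]) = smat (\<Prod>i<Suc n. zs i ^ (m ! i)) (F \<rho>s)"
proof -
  have H: "j \<le> Suc n \<Longrightarrow> F (map (\<lambda>i. if i < j then smat (zs i) (\<rho>s ! i) else \<rho>s ! i) [0..<Suc n])
      = smat (\<Prod>i<j. zs i ^ (m ! i)) (F \<rho>s)" for j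
  proof (induction j)
    case 0
    have "map (\<lambda>i. \<rho>s ! i) [0..<Suc n] = \<rho>s" using len map_nth[of \<rho>s] by simp
    then show ?case by simp
  next
    case (Suc j)
    define xs where "xs = map (\<lambda>i. if i < j then smat (zs i) (\<rho>s ! i) else \<rho>s ! i) [0..<Suc n]"
    have lx: "length xs = Suc n" unfolding xs_def by simp
    have jn: "j \<le> n" using Suc.prems by simp
    have upd: "map (\<lambda>i. if i < Suc j then smat (zs i) (\<rho>s ! i) else \<rho>s ! i) [0..<Suc n]
        = xs[j := smat (zs j) (xs ! j)]"
      by (rule nth_equalityI) (use jn in \<open>auto simp: xs_def nth_list_update simp del: upt_Suc\<close>)
    have "F (xs[j := smat (zs j) (xs ! j)]) = smat (zs j ^ (m ! j)) (F xs)"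
      using hom jn lx unfolding homog_in_def by blast
    also have "F xs = smat (\<Prod>i<j. zs i ^ (m ! i)) (F \<rho>s)" using Suc xs_def by simp
    finally show ?case unfolding upd by (simp add: smat_smat mult.commute)
  qed
  have M: "map (\<lambda>i. if i < Suc n then smat (zs i) (\<rho>s ! i) else \<rho>s ! i) [0..<Suc n]
     = map (\<lambda>i. smat (zs i) (\<rho>s ! i)) [0..<Suc n]"
    by (rule map_cong) (auto simp del: upt_Suc)
  show ?thesis using H[OF order_refl] unfolding M .
qed


lemma trace_sum: "trace (\<Sum>x\<in>F. f x) = (\<Sum>x\<in>F. trace (f x :: 'a::comm_semiring_1^'n^'n))"
  unfolding trace_def by (simp add: sum_component, rule sum.swap)

lemma block_psd_zero: "block_psd k (\<lambda>i j. 0)"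
  unfolding block_psd_def by simp



declare replicate_Suc[simp del]

theorem mainTheorem4:
  fixes n :: nat
    and K :: "'d::finite op list \<Rightarrow> 'd op"
    and M :: "nat list set"
    and Kd :: "nat list \<Rightarrow> 'd op list \<Rightarrow> 'd op"
  assumes fin: "finite M"
    and deg_len: "\<forall>m\<in>M. length m = Suc n"
    and decomp: "\<forall>\<rho>s. length \<rho>s = Suc n \<longrightarrow> K \<rho>s = (\<Sum>m\<in>M. Kd m \<rho>s)"
    and cp: "\<forall>m\<in>M. mv_CP n (Kd m)"
    and homog: "\<forall>m\<in>M. \<forall>i\<le>n. homog_in n (Kd m) i (m ! i)"
    and lin: "\<forall>m\<in>M. \<forall>i\<le>n. (m ! i = 1 \<and> (\<forall>j\<le>n. j \<noteq> i \<longrightarrow> m ! j = 0))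
                \<longrightarrow> additive_in n (Kd m) i"
    and nonsig: "\<forall>p::real. \<forall>\<rho>s. 0 \<le> p \<and> p \<le> 1 \<and> length \<rho>s = Suc n
                   \<and> (\<forall>\<rho>\<in>set \<rho>s. density \<rho>)
                   \<longrightarrow> K (map (smat (complex_of_real p)) \<rho>s) = smat (complex_of_real p) (K \<rho>s)"
    and tp: "\<forall>\<rho>s. length \<rho>s = Suc n \<and> (\<forall>\<rho>\<in>set \<rho>s. density \<rho>) \<longrightarrow> trace (K \<rho>s) = 1"
  shows "\<exists>(N::nat) (V :: nat \<Rightarrow> nat \<Rightarrow> 'd op) (p :: nat \<Rightarrow> real).
           (\<forall>m\<le>n. 0 \<le> p m) \<and> (\<Sum>m\<le>n. p m) = 1 \<and>
           (\<forall>m\<le>n. (\<Sum>\<alpha><N. V m \<alpha> ** adj (V m \<alpha>)) = smat (complex_of_real (p m)) (mat 1)) \<and>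
           (\<forall>\<rho>s. length \<rho>s = Suc n \<and> (\<forall>\<rho>\<in>set \<rho>s. density \<rho>) \<longrightarrow>
              K \<rho>s = (\<Sum>m\<le>n. \<Sum>\<alpha><N. adj (V m \<alpha>) ** (\<rho>s ! m) ** V m \<alpha>))"
proof -
  define e :: "nat \<Rightarrow> nat list" where "e l = (replicate (Suc n) 0)[l := 1]" for l
  define deg :: "nat list \<Rightarrow> nat" where "deg m = (\<Sum>i<Suc n. m ! i)" for m
  define zeros :: "'d op list" where "zeros = replicate (Suc n) 0"
  define L where "L l A = (if e l \<in> M then Kd (e l) (zeros[l := A]) else 0)" for l A
  have e_nth: "e l ! i = (if i = l then 1 else 0)" if "l \<le> n" "i < Suc n" for l i
    unfolding e_def using that by (simp add: nth_list_update del: replicate_Suc)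
  have e_len: "length (e l) = Suc n" for l unfolding e_def by (simp del: replicate_Suc)
  have deg_e: "deg (e l) = 1" if "l \<le> n" for l
  proof -
    have "deg (e l) = (\<Sum>i<Suc n. if i = l then 1 else 0)"
      unfolding deg_def by (intro sum.cong refl) (use e_nth that in auto)
    then show ?thesis using that by simp
  qed
  have deg1: "\<exists>l\<le>n. m = e l" if lm: "length m = Suc n" and dm: "deg m = 1" for m
  proof -
    have "\<exists>l<Suc n. m ! l \<noteq> 0"
    proof (rule ccontr)
      assume "\<not> (\<exists>l<Suc n. m ! l \<noteq> 0)"
      then have "deg m = 0" unfolding deg_def by simp
      then show False using dm by simp
    qed
    then obtain l where l: "l < Suc n" "m ! l \<noteq> 0" by blast
    have "deg m = m ! l + (\<Sum>i\<in>{..<Suc n} - {l}. m ! i)"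
      unfolding deg_def using l by (subst sum.remove[of _ l]) (auto simp del: lessThan_Suc)
    then have ml: "m ! l = 1" and rest: "(\<Sum>i\<in>{..<Suc n} - {l}. m ! i) = 0"
      using dm l(2) by linarith+
    have "m ! i = 0" if "i < Suc n" "i \<noteq> l" for i using rest that by simp
    then have "m = e l"
      using ml l lm e_len by (intro nth_equalityI) (auto simp: e_nth)
    moreover have "l \<le> n" using l by simp
    ultimately show ?thesis by blast
  qed
  have e_inj: "inj_on e {..n}"
  proof
    fix l l' assume "l \<in> {..n}" "l' \<in> {..n}" "e l = e l'"
    then have "e l ! l = e l' ! l" by simp
    then show "l = l'" using \<open>l \<in> {..n}\<close> \<open>l' \<in> {..n}\<close> e_nth by (auto split: if_splits)
  qed
  have zl: "length (zeros[l := A]) = Suc n" for l A unfolding zeros_def by simp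
  have Ladd: "\<forall>A B. L l (A + B) = L l A + L l B" if ln: "l \<le> n" for l
  proof (cases "e l \<in> M")
    case True
    have "additive_in n (Kd (e l)) l"
      using lin True ln e_nth by auto
    then show ?thesis unfolding L_def additive_in_def using True zl[of l 0]
      by (auto simp: zeros_def)
  next
    case False then show ?thesis unfolding L_def by simp
  qed
  have Lhom: "\<forall>z A. L l (smat z A) = smat z (L l A)" if ln: "l \<le> n" for l
  proof (cases "e l \<in> M")
    case True
    have h: "homog_in n (Kd (e l)) l 1" using homog True ln e_nth by fastforce
    show ?thesis
    proof (intro allI)
      fix z A
      have "Kd (e l) ((zeros[l := A])[l := smat z ((zeros[l := A]) ! l)]) = smat (z ^ 1) (Kd (e l) (zeros[l := A]))"
        using h zl unfolding homog_in_def by blast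
      moreover have "(zeros[l := A])[l := smat z ((zeros[l := A]) ! l)] = zeros[l := smat z A]"
        using ln by (simp add: zeros_def)
      ultimately show "L l (smat z A) = smat z (L l A)" unfolding L_def using True by simp
    qed
  next
    case False then show ?thesis unfolding L_def by (simp add: smat_def vec_eq_iff)
  qed
  have Lcp: "\<forall>k B. block_psd k B \<longrightarrow> block_psd k (\<lambda>i j. L l (B i j))" if ln: "l \<le> n" for l
  proof (cases "e l \<in> M")
    case True
    have mv: "mv_CP n (Kd (e l))" using cp True by blast
    show ?thesis
    proof (intro allI impI)
      fix k and B :: "nat \<Rightarrow> nat \<Rightarrow> 'd op"
      assume bB: "block_psd k B"
      define \<rho>b where "\<rho>b m = (if m = l then B else (\<lambda>i j. 0))" for m
      have "\<forall>m\<le>n. block_psd k (\<rho>b m)" unfolding \<rho>b_def using bB block_psd_zero by auto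
      then have r: "block_psd k (\<lambda>i j. Kd (e l) (map (\<lambda>m. \<rho>b m i j) [0..<Suc n]))"
        using mv unfolding mv_CP_def by blast
      have "map (\<lambda>m. \<rho>b m i j) [0..<Suc n] = zeros[l := B i j]" for i j
        by (rule nth_equalityI) (use ln in \<open>auto simp: zeros_def \<rho>b_def nth_list_update simp del: upt_Suc\<close>)
      then show "block_psd k (\<lambda>i j. L l (B i j))" using r True unfolding L_def by simp
    qed
  next
    case False then show ?thesis unfolding L_def by (simp add: block_psd_def)
  qed
  have "\<forall>l\<in>{..n}. \<exists>W :: 'd\<times>'d \<Rightarrow> 'd op. \<forall>A. L l A = (\<Sum>k\<in>UNIV. adj (W k) ** A ** W k)"
    using kraus[OF Ladd Lhom Lcp] by blast
  then have "\<exists>W :: nat \<Rightarrow> 'd\<times>'d \<Rightarrow> 'd op. \<forall>l\<in>{..n}. \<forall>A. L l A = (\<Sum>k\<in>UNIV. adj (W l k) ** A ** W l k)" by (rule bchoice)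
  then obtain W :: "nat \<Rightarrow> 'd\<times>'d \<Rightarrow> 'd op" where
    W0: "\<forall>l\<in>{..n}. \<forall>A. L l A = (\<Sum>k\<in>UNIV. adj (W l k) ** A ** W l k)" by blast
  have W: "\<And>l A. l \<le> n \<Longrightarrow> L l A = (\<Sum>k\<in>UNIV. adj (W l k) ** A ** W l k)" using W0 by simp
  have scale: "Kd m (map (smat c) \<rho>s) = smat (c ^ deg m) (Kd m \<rho>s)"
    if mM: "m \<in> M" and len: "length \<rho>s = Suc n" for m c \<rho>s
  proof -
    have hm: "\<forall>i\<le>n. homog_in n (Kd m) i (m ! i)" using homog mM by blast
    have "map (smat c) \<rho>s = map (\<lambda>i. smat c (\<rho>s ! i)) [0..<Suc n]"
      by (rule nth_equalityI) (simp_all add: len nth_map_upt del: upt_Suc)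
    also have "Kd m \<dots> = smat (\<Prod>i<Suc n. c ^ (m ! i)) (Kd m \<rho>s)"
      by (rule homog_scale[OF hm len])
    finally show ?thesis unfolding deg_def power_sum by simp
  qed
  have proj: "Kd (e l) \<rho>s = L l (\<rho>s ! l)" if ln: "l \<le> n" and eM: "e l \<in> M" and len: "length \<rho>s = Suc n" for l \<rho>s
  proof -
    have hm: "\<forall>i\<le>n. homog_in n (Kd (e l)) i (e l ! i)" using homog eM by blast
    define zs :: "nat \<Rightarrow> complex" where "zs i = (if i = l then 1 else 0)" for i
    have "Kd (e l) (map (\<lambda>i. smat (zs i) (\<rho>s ! i)) [0..<Suc n]) = smat (\<Prod>i<Suc n. zs i ^ (e l ! i)) (Kd (e l) \<rho>s)"
      by (rule homog_scale[OF hm len])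
    moreover have "(\<Prod>i<Suc n. zs i ^ (e l ! i)) = 1"
      by (rule prod.neutral) (use ln e_nth in \<open>auto simp: zs_def\<close>)
    moreover have "map (\<lambda>i. smat (zs i) (\<rho>s ! i)) [0..<Suc n] = zeros[l := \<rho>s ! l]"
      by (rule nth_equalityI) (use ln in \<open>auto simp: zs_def zeros_def nth_list_update nth_map_upt simp del: upt_Suc\<close>)
    ultimately show ?thesis unfolding L_def using eM by simp
  qed
  have Kdec: "K \<rho>s = (\<Sum>l\<le>n. L l (\<rho>s ! l))"
    if len: "length \<rho>s = Suc n" and dens: "\<forall>\<rho>\<in>set \<rho>s. density \<rho>" for \<rho>s
  proof -
    have P1: "(\<Sum>m\<in>M. smat (of_real p ^ deg m) (Kd m \<rho>s)) = smat (of_real p) (\<Sum>m\<in>M. Kd m \<rho>s)"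
      if p: "0 \<le> p" "p \<le> 1" for p :: real
    proof -
      have "K (map (smat (of_real p)) \<rho>s) = (\<Sum>m\<in>M. Kd m (map (smat (of_real p)) \<rho>s))"
        using decomp len by simp
      also have "\<dots> = (\<Sum>m\<in>M. smat (of_real p ^ deg m) (Kd m \<rho>s))"
        by (intro sum.cong refl scale len)
      finally have "K (map (smat (of_real p)) \<rho>s) = (\<Sum>m\<in>M. smat (of_real p ^ deg m) (Kd m \<rho>s))" .
      moreover have "K (map (smat (of_real p)) \<rho>s) = smat (of_real p) (K \<rho>s)"
        using nonsig p len dens by blast
      ultimately show ?thesis using decomp len by simp
    qed
    define D where "D = Suc (\<Sum>m\<in>M. deg m)"
    have degD: "deg m \<le> D" if "m \<in> M" for m
      using member_le_sum[OF that _ fin, of deg] unfolding D_def by simp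
    have P2: "(\<Sum>m\<in>{m\<in>M. deg m = 1}. Kd m \<rho>s) $ a $ b = (\<Sum>m\<in>M. Kd m \<rho>s) $ a $ b" for a b
    proof -
      define X where "X = (\<Sum>m\<in>M. Kd m \<rho>s $ a $ b)"
      define c where "c d = (\<Sum>m\<in>{m\<in>M. deg m = d}. Kd m \<rho>s $ a $ b) - (if d = 1 then X else 0)" for d
      have poly: "(\<Sum>d\<le>D. c d * x ^ d) = (\<Sum>m\<in>M. Kd m \<rho>s $ a $ b * x ^ deg m) - X * x" for x :: complex
      proof -
        have "(\<Sum>d\<le>D. (\<Sum>m\<in>{m\<in>M. deg m = d}. Kd m \<rho>s $ a $ b) * x ^ d)
            = (\<Sum>d\<le>D. \<Sum>m\<in>M. if deg m = d then Kd m \<rho>s $ a $ b * x ^ d else 0)"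
          by (intro sum.cong refl) (simp add: sum.inter_filter[OF fin] sum_distrib_right if0_mult_l)
        also have "\<dots> = (\<Sum>m\<in>M. \<Sum>d\<le>D. if deg m = d then Kd m \<rho>s $ a $ b * x ^ d else 0)"
          by (rule sum.swap)
        also have "\<dots> = (\<Sum>m\<in>M. Kd m \<rho>s $ a $ b * x ^ deg m)"
          by (intro sum.cong refl) (use degD in simp)
        finally have A1: "(\<Sum>d\<le>D. (\<Sum>m\<in>{m\<in>M. deg m = d}. Kd m \<rho>s $ a $ b) * x ^ d) = (\<Sum>m\<in>M. Kd m \<rho>s $ a $ b * x ^ deg m)" .
        have A2: "(\<Sum>d\<le>D. (if d = 1 then X else 0) * x ^ d) = X * x"
        proof -
          have "1 \<le> D" unfolding D_def by simp
          then show ?thesis by (simp add: if0_mult_l)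
        qed
        show ?thesis unfolding c_def left_diff_distrib sum_subtractf A1 A2 ..
      qed
      have zero: "(\<Sum>d\<le>D. c d * of_real p ^ d) = 0" if "0 \<le> p" "p \<le> 1" for p :: real
      proof -
        have "(\<Sum>m\<in>M. smat (of_real p ^ deg m) (Kd m \<rho>s)) $ a $ b = smat (of_real p) (\<Sum>m\<in>M. Kd m \<rho>s) $ a $ b"
          using P1[OF that] by simp
        then have "(\<Sum>m\<in>M. Kd m \<rho>s $ a $ b * of_real p ^ deg m) = X * of_real p"
          unfolding X_def by (simp add: sum_distrib_left mult.commute)
        then show ?thesis unfolding poly by simp
      qed
      have "complex_of_real ` {0..1} \<subseteq> {x. (\<Sum>d\<le>D. c d * x ^ d) = 0}" using zero by auto
      moreover have "infinite (complex_of_real ` {0..1})"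
      proof
        assume f: "finite (complex_of_real ` {0..1})"
        have "inj_on complex_of_real {0..1}" using inj_of_real by (rule inj_on_subset) simp
        then have "finite {0..1::real}" using finite_imageD f by blast
        then show False using infinite_Icc[of "0::real" 1] by simp
      qed
      ultimately have "infinite {x. (\<Sum>d\<le>D. c d * x ^ d) = 0}" using finite_subset by blast
      then have "\<forall>i\<le>D. c i = 0" using polyfun_finite_roots[of c D] by blast
      then have "c 1 = 0" unfolding D_def by simp
      then show ?thesis unfolding c_def X_def by simp
    qed
    have P3: "{m\<in>M. deg m = 1} = e ` {l\<in>{..n}. e l \<in> M}"
    proof
      show "{m\<in>M. deg m = 1} \<subseteq> e ` {l\<in>{..n}. e l \<in> M}"
      proof
        fix m assume "m \<in> {m\<in>M. deg m = 1}"
        then obtain l where "l \<le> n" "m = e l" "m \<in> M" using deg1 deg_len by blast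
        then show "m \<in> e ` {l\<in>{..n}. e l \<in> M}" by auto
      qed
      show "e ` {l\<in>{..n}. e l \<in> M} \<subseteq> {m\<in>M. deg m = 1}" using deg_e by auto
    qed
    have "K \<rho>s = (\<Sum>m\<in>M. Kd m \<rho>s)" using decomp len by simp
    also have "\<dots> = (\<Sum>m\<in>{m\<in>M. deg m = 1}. Kd m \<rho>s)" using P2 by (simp add: vec_eq_iff)
    also have "\<dots> = (\<Sum>l\<in>{l\<in>{..n}. e l \<in> M}. Kd (e l) \<rho>s)"
    proof -
      have inj: "inj_on e {l\<in>{..n}. e l \<in> M}" by (rule inj_on_subset[OF e_inj]) auto
      show ?thesis unfolding P3 using sum.reindex[OF inj, of "\<lambda>m. Kd m \<rho>s"] by (simp add: comp_def)
    qed
    also have "\<dots> = (\<Sum>l\<in>{l\<in>{..n}. e l \<in> M}. L l (\<rho>s ! l))"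
      by (intro sum.cong refl proj len) auto
    also have "\<dots> = (\<Sum>l\<le>n. L l (\<rho>s ! l))"
      by (rule sum.mono_neutral_left) (auto simp: L_def)
    finally show ?thesis .
  qed
  define S where "S l = (\<Sum>k\<in>UNIV. W l k ** adj (W l k))" for l
  have trL: "trace (L l A) = (\<Sum>x\<in>UNIV. \<Sum>y\<in>UNIV. A $ x $ y * S l $ y $ x)" if "l \<le> n" for l A
    unfolding W[OF that] S_def by (rule trace_kraus)
  have trP: "trace (L l (Pm v)) = qf UNIV (\<lambda>i j. S l $ i $ j) v" if "l \<le> n" for l v
    unfolding trL[OF that] by (rule Pm_trace_form)
  define c0 :: 'd where "c0 = undefined"
  define \<sigma>0 :: "'d op" where "\<sigma>0 = Emat c0 c0"
  have d0: "density \<sigma>0" unfolding \<sigma>0_def by (rule density_Emat)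
  have trsum: "trace (K \<rho>s) = (\<Sum>l\<le>n. trace (L l (\<rho>s ! l)))"
    if "length \<rho>s = Suc n" "\<forall>\<rho>\<in>set \<rho>s. density \<rho>" for \<rho>s
    unfolding Kdec[OF that] by (rule trace_sum)
  have rep: "trace (K (replicate (Suc n) \<sigma>0)) = 1" using tp d0 by simp
  have tr_const: "trace (L l \<tau>) = trace (L l \<sigma>0)" if ln: "l \<le> n" and d\<tau>: "density \<tau>" for l \<tau>
  proof -
    define \<rho>s where "\<rho>s = (replicate (Suc n) \<sigma>0)[l := \<tau>]"
    have len: "length \<rho>s = Suc n" unfolding \<rho>s_def by simp
    have ds: "\<forall>\<rho>\<in>set \<rho>s. density \<rho>"
      using set_update_subset_insert[of "replicate (Suc n) \<sigma>0" l \<tau>] d0 d\<tau> unfolding \<rho>s_def by auto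
    have "1 = (\<Sum>l'\<le>n. trace (L l' (\<rho>s ! l')))" using tp len ds trsum by simp
    also have "\<dots> = trace (L l (\<rho>s ! l)) + (\<Sum>l'\<in>{..n} - {l}. trace (L l' (\<rho>s ! l')))"
      using ln by (subst sum.remove[of _ l]) auto
    also have "(\<Sum>l'\<in>{..n} - {l}. trace (L l' (\<rho>s ! l'))) = (\<Sum>l'\<in>{..n} - {l}. trace (L l' \<sigma>0))"
      by (intro sum.cong refl) (auto simp: \<rho>s_def nth_list_update)
    finally have A: "1 = trace (L l \<tau>) + (\<Sum>l'\<in>{..n} - {l}. trace (L l' \<sigma>0))"
      using ln by (simp add: \<rho>s_def nth_list_update)
    have "1 = (\<Sum>l'\<le>n. trace (L l' \<sigma>0))" using rep trsum[of "replicate (Suc n) \<sigma>0"] d0 by simp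
    also have "\<dots> = trace (L l \<sigma>0) + (\<Sum>l'\<in>{..n} - {l}. trace (L l' \<sigma>0))"
      using ln by (subst sum.remove[of _ l]) auto
    finally show ?thesis using A by (metis add_right_cancel)
  qed
  define p where "p l = (\<Sum>k\<in>UNIV. \<Sum>a\<in>UNIV. cmod (W l k $ c0 $ a) ^ 2)" for l
  have p0: "0 \<le> p l" for l unfolding p_def by (intro sum_nonneg) auto
  have Sc0: "S l $ c0 $ c0 = of_real (p l)" for l unfolding S_def p_def by (rule kraus_diag)
  have delta_qf: "qf UNIV (\<lambda>i j. S l $ i $ j) (\<lambda>q. if q = c then 1 else 0) = S l $ c $ c" for l c
    using qf_one[of "UNIV :: 'd set" c "\<lambda>i j. S l $ i $ j" 1] by simp
  have trE: "trace (L l (Emat c c)) = S l $ c $ c" if "l \<le> n" for l c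
    unfolding Emat_Pm trP[OF that] delta_qf ..
  have tr0: "trace (L l \<sigma>0) = of_real (p l)" if "l \<le> n" for l
    unfolding \<sigma>0_def trE[OF that] Sc0 ..
  have Sdiag: "S l $ c $ c = of_real (p l)" if "l \<le> n" for l c
    using tr_const[OF that density_Emat[of c]] trE[OF that] tr0[OF that] by simp
  have Soff: "S l $ c $ c' = 0" if ln: "l \<le> n" and cc: "c \<noteq> c'" for l c c'
  proof -
    define s :: complex where "s = of_real (sqrt (1/2))"
    have ss: "cnj s * s = 1/2" unfolding s_def by (simp flip: of_real_mult)
    define v1 where "v1 q = (if q = c then s else if q = c' then s else 0)" for q
    define v2 where "v2 q = (if q = c then s else if q = c' then \<i> * s else 0)" for q
    have "(\<Sum>i\<in>UNIV. v1 i * cnj (v1 i)) = v1 c * cnj (v1 c) + v1 c' * cnj (v1 c')"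
      by (rule sum_two) (auto simp: v1_def cc)
    also have "\<dots> = 1" using ss cc by (simp add: v1_def mult.commute)
    finally have dv1: "density (Pm v1)" by (rule density_Pm)
    have "(\<Sum>i\<in>UNIV. v2 i * cnj (v2 i)) = v2 c * cnj (v2 c) + v2 c' * cnj (v2 c')"
      by (rule sum_two) (auto simp: v2_def cc)
    also have "\<dots> = 1" using ss cc by (simp add: v2_def algebra_simps)
    finally have dv2: "density (Pm v2)" by (rule density_Pm)
    define P where "P = S l $ c $ c"
    have Pc': "S l $ c' $ c' = P" unfolding P_def using Sdiag[OF ln] by simp
    have "qf UNIV (\<lambda>i j. S l $ i $ j) v1 = trace (L l \<sigma>0)"
      using trP[OF ln, of v1] tr_const[OF ln dv1] by simp
    also have "\<dots> = P" unfolding P_def Sdiag[OF ln] tr0[OF ln] ..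
    finally have q1: "qf UNIV (\<lambda>i j. S l $ i $ j) v1 = P" .
    have "qf UNIV (\<lambda>i j. S l $ i $ j) v2 = trace (L l \<sigma>0)"
      using trP[OF ln, of v2] tr_const[OF ln dv2] by simp
    also have "\<dots> = P" unfolding P_def Sdiag[OF ln] tr0[OF ln] ..
    finally have q2: "qf UNIV (\<lambda>i j. S l $ i $ j) v2 = P" .
    have v1e: "v1 = (\<lambda>q. if q = c then s else if q = c' then s else 0)" unfolding v1_def ..
    have v2e: "v2 = (\<lambda>q. if q = c then s else if q = c' then \<i> * s else 0)" unfolding v2_def ..
    have "qf UNIV (\<lambda>i j. S l $ i $ j) v1 = (cnj s * s) * (P + S l $ c $ c' + S l $ c' $ c + P)"
      unfolding v1e qf_two[OF finite_class.finite_UNIV UNIV_I UNIV_I cc] Pc' P_def[symmetric]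
      by (simp add: algebra_simps)
    then have e1: "(1/2) * (P + S l $ c $ c' + S l $ c' $ c + P) = P" using q1 ss by simp
    have "qf UNIV (\<lambda>i j. S l $ i $ j) v2 = (cnj s * s) * (P + \<i> * S l $ c $ c' - \<i> * S l $ c' $ c + P)"
      unfolding v2e qf_two[OF finite_class.finite_UNIV UNIV_I UNIV_I cc] Pc' P_def[symmetric]
      by (simp add: algebra_simps)
    then have e2: "(1/2) * (P + \<i> * S l $ c $ c' - \<i> * S l $ c' $ c + P) = P" using q2 ss by simp
    from e1 have f1: "S l $ c $ c' + S l $ c' $ c = 0" by (simp add: field_simps)
    from e2 have f2: "\<i> * (S l $ c $ c' - S l $ c' $ c) = 0" by (simp add: field_simps)
    then have "S l $ c $ c' = S l $ c' $ c" by simp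
    then show ?thesis using f1 by simp
  qed
  have Sform: "S l = smat (of_real (p l)) (mat 1)" if "l \<le> n" for l
    by (simp add: vec_eq_iff mat_def Sdiag[OF that] Soff[OF that])
  have psum: "(\<Sum>l\<le>n. p l) = 1"
  proof -
    have "1 = (\<Sum>l\<le>n. trace (L l \<sigma>0))" using rep trsum[of "replicate (Suc n) \<sigma>0"] d0 by simp
    also have "\<dots> = (\<Sum>l\<le>n. complex_of_real (p l))" by (intro sum.cong refl tr0) simp
    finally have "complex_of_real (\<Sum>l\<le>n. p l) = 1" by (simp add: of_real_sum)
    then show ?thesis by (simp only: of_real_eq_1_iff)
  qed
  define N where "N = CARD('d\<times>'d)"
  obtain h where h: "bij_betw h {0..<N} (UNIV :: ('d\<times>'d) set)"
    using ex_bij_betw_nat_finite[of "UNIV :: ('d\<times>'d) set"] unfolding N_def by auto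
  have h': "bij_betw h {..<N} (UNIV :: ('d\<times>'d) set)" using h by (simp add: atLeast0LessThan)
  define V where "V l \<alpha> = W l (h \<alpha>)" for l \<alpha>
  have reidx: "(\<Sum>\<alpha><N. f (h \<alpha>)) = (\<Sum>k\<in>UNIV. f k)" for f :: "'d\<times>'d \<Rightarrow> 'd op"
    by (rule sum.reindex_bij_betw[OF h'])
  have c1: "\<forall>m\<le>n. (\<Sum>\<alpha><N. V m \<alpha> ** adj (V m \<alpha>)) = smat (complex_of_real (p m)) (mat 1)"
  proof (intro allI impI)
    fix m assume "m \<le> n"
    have "(\<Sum>\<alpha><N. V m \<alpha> ** adj (V m \<alpha>)) = S m"
      unfolding V_def S_def using reidx[of "\<lambda>k. W m k ** adj (W m k)"] by simp
    then show "(\<Sum>\<alpha><N. V m \<alpha> ** adj (V m \<alpha>)) = smat (complex_of_real (p m)) (mat 1)"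
      using Sform[OF \<open>m \<le> n\<close>] by simp
  qed
  have c2: "\<forall>\<rho>s. length \<rho>s = Suc n \<and> (\<forall>\<rho>\<in>set \<rho>s. density \<rho>) \<longrightarrow>
              K \<rho>s = (\<Sum>m\<le>n. \<Sum>\<alpha><N. adj (V m \<alpha>) ** (\<rho>s ! m) ** V m \<alpha>)"
  proof (intro allI impI)
    fix \<rho>s :: "'d op list" assume a: "length \<rho>s = Suc n \<and> (\<forall>\<rho>\<in>set \<rho>s. density \<rho>)"
    have "K \<rho>s = (\<Sum>m\<le>n. L m (\<rho>s ! m))" using Kdec a by blast
    also have "\<dots> = (\<Sum>m\<le>n. \<Sum>\<alpha><N. adj (V m \<alpha>) ** (\<rho>s ! m) ** V m \<alpha>)"
    proof (intro sum.cong refl)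
      fix m assume "m \<in> {..n}"
      then show "L m (\<rho>s ! m) = (\<Sum>\<alpha><N. adj (V m \<alpha>) ** (\<rho>s ! m) ** V m \<alpha>)"
        unfolding V_def using W[of m] reidx[of "\<lambda>k. adj (W m k) ** (\<rho>s ! m) ** W m k"] by simp
    qed
    finally show "K \<rho>s = (\<Sum>m\<le>n. \<Sum>\<alpha><N. adj (V m \<alpha>) ** (\<rho>s ! m) ** V m \<alpha>)" .
  qed
  show ?thesis using p0 psum c1 c2 by blast
qed

end
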